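(* Let $p\in(0,1)$ and let $\mu\ge1$ be an integer. Let $X_1,X_2,\dots$ be i.i.d. Bernoulli random variables with $\Pr[X_t=1]=p$. Define sets $M,N\subseteq\mathbb{N}$ by the following process: starting from $t=1$, put $t$ into $M$ if $X_t=1$ and into $N$ if $X_t=0$; the process terminates immediately after $|M|=\mu$. For each $t\ge1$ let $w_t=w_t(X_1,\dots,X_{t-1})\ge0$ be a non-negative function of the first $t-1$ variables ($w_1$ a constant), with $w_t=0$ whenever the process terminated before time $t$, and for $T\subseteq\mathbb{N}$ set $w(T)=\sum_{t\in T}w_t(X_1,\dots,X_{t-1})$. Then $$\mathbb{E}[w(M)]=\frac{p}{1-p}\,\mathbb{E}[w(N)].$$ *)

theory Defs
  imports "HOL-Probability.Probability"
begin

text \<open>The i.i.d. Bernoulli(p) sequence: omega t = X_t (index 0 is unused).\<close>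
definition bern_seq :: "real \<Rightarrow> (nat \<Rightarrow> bool) measure" where
  "bern_seq p = PiM UNIV (\<lambda>_::nat. measure_pmf (bernoulli_pmf p))"

definition active :: "nat \<Rightarrow> (nat \<Rightarrow> bool) \<Rightarrow> nat \<Rightarrow> bool" where
  "active \<mu> \<omega> t \<longleftrightarrow> card {s \<in> {1..<t}. \<omega> s} < \<mu>"

definition M_set :: "nat \<Rightarrow> (nat \<Rightarrow> bool) \<Rightarrow> nat set" where
  "M_set \<mu> \<omega> = {t. 1 \<le> t \<and> active \<mu> \<omega> t \<and> \<omega> t}"

definition N_set :: "nat \<Rightarrow> (nat \<Rightarrow> bool) \<Rightarrow> nat set" where
  "N_set \<mu> \<omega> = {t. 1 \<le> t \<and> active \<mu> \<omega> t \<and> \<not> \<omega> t}"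

definition wsum :: "(nat \<Rightarrow> bool list \<Rightarrow> real) \<Rightarrow> (nat \<Rightarrow> bool) \<Rightarrow> nat set \<Rightarrow> ennreal" where
  "wsum w \<omega> T = (\<Sum>t. ennreal (w t (map \<omega> [1..<t])) * indicator T t)"

end

theory Submission imports Defs begin
lemma indep_coord:
  fixes f :: "(nat \<Rightarrow> bool) \<Rightarrow> ennreal" and g :: "bool \<Rightarrow> ennreal"
  assumes p: "0 \<le> p" "p \<le> 1"
  assumes fm: "f \<in> borel_measurable (bern_seq p)" and fi: "\<And>\<omega> x. f (fun_upd \<omega> t x) = f \<omega>"
  shows "(\<integral>\<^sup>+\<omega>. f \<omega> * g (\<omega> t) \<partial>bern_seq p) = (\<integral>\<^sup>+\<omega>. f \<omega> \<partial>bern_seq p) * (\<integral>\<^sup>+x. g x \<partial>measure_pmf (bernoulli_pmf p))"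
proof -
  define B where "B = measure_pmf (bernoulli_pmf p)"
  define Q where "Q = PiM (UNIV - {t}) (\<lambda>_::nat. B)"
  have P: "bern_seq p = PiM UNIV (\<lambda>_. B)" by (simp add: bern_seq_def B_def)
  interpret B: prob_space B unfolding B_def by (rule prob_space_measure_pmf)
  interpret Q: prob_space Q unfolding Q_def by (intro prob_space_PiM) (simp add: B.prob_space_axioms)
  interpret BQ: pair_sigma_finite B Q by unfold_locales
  have ins: "insert t (UNIV - {t}) = UNIV" by auto
  have D: "distr (B \<Otimes>\<^sub>M Q) (PiM UNIV (\<lambda>_. B)) (\<lambda>(x, X). fun_upd X t x) = PiM UNIV (\<lambda>_. B)"
    using distr_pair_PiM_eq_PiM[of "UNIV - {t}" "\<lambda>_. B" t] B.prob_space_axioms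
    unfolding Q_def ins by simp
  have mp0: "(\<lambda>z. fun_upd (snd z) t (fst z)) \<in> measurable (B \<Otimes>\<^sub>M Q) (PiM UNIV (\<lambda>_. B))"
    unfolding Q_def by (rule measurable_fun_upd[where J="UNIV-{t}"]) auto
  have mp: "(\<lambda>(x, X). fun_upd X t x) \<in> measurable (B \<Otimes>\<^sub>M Q) (PiM UNIV (\<lambda>_. B))"
    using mp0 by (simp add: split_beta)
  have gen: "(\<integral>\<^sup>+\<omega>. F \<omega> \<partial>PiM UNIV (\<lambda>_. B)) = (\<integral>\<^sup>+x. \<integral>\<^sup>+X. F (fun_upd X t x) \<partial>Q \<partial>B)"
    if Fm: "F \<in> borel_measurable (PiM UNIV (\<lambda>_. B))" for F :: "_ \<Rightarrow> ennreal"
  proof -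
    have "(\<integral>\<^sup>+\<omega>. F \<omega> \<partial>PiM UNIV (\<lambda>_. B)) = (\<integral>\<^sup>+\<omega>. F \<omega> \<partial>distr (B \<Otimes>\<^sub>M Q) (PiM UNIV (\<lambda>_. B)) (\<lambda>(x, X). fun_upd X t x))"
      using D by simp
    also have "\<dots> = (\<integral>\<^sup>+z. F (case z of (x, X) \<Rightarrow> fun_upd X t x) \<partial>(B \<Otimes>\<^sub>M Q))"
      using Fm by (intro nn_integral_distr[OF mp]) simp
    also have "\<dots> = (\<integral>\<^sup>+x. \<integral>\<^sup>+X. F (fun_upd X t x) \<partial>Q \<partial>B)"
      by (subst Q.nn_integral_fst[symmetric]) (use measurable_comp[OF mp Fm] in \<open>simp_all add: comp_def\<close>)
    finally show ?thesis .
  qed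
  have gm: "g \<in> borel_measurable B" unfolding B_def by simp
  have fmB: "f \<in> borel_measurable (PiM UNIV (\<lambda>_. B))" using fm P by simp
  have mq: "(\<lambda>X. fun_upd X t False) \<in> measurable Q (PiM UNIV (\<lambda>_. B))"
    unfolding Q_def by (rule measurable_fun_upd[where J="UNIV-{t}"]) (auto simp: B_def)
  have fQ: "(\<lambda>X. f X) \<in> borel_measurable Q"
    using measurable_comp[OF mq fmB] by (simp add: comp_def fi)
  have gt: "(\<lambda>\<omega>. g (\<omega> t)) \<in> borel_measurable (PiM UNIV (\<lambda>_. B))"
    using measurable_comp[OF measurable_component_singleton[of t UNIV "\<lambda>_. B"] gm] by (simp add: comp_def)
  have fgm: "(\<lambda>\<omega>. f \<omega> * g (\<omega> t)) \<in> borel_measurable (PiM UNIV (\<lambda>_. B))"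
    using fmB gt by (rule borel_measurable_times_ennreal)
  have "(\<integral>\<^sup>+\<omega>. f \<omega> * g (\<omega> t) \<partial>bern_seq p) = (\<integral>\<^sup>+x. \<integral>\<^sup>+X. f X * g x \<partial>Q \<partial>B)"
    unfolding P by (subst gen[OF fgm]) (simp add: fi)
  also have "\<dots> = (\<integral>\<^sup>+x. (\<integral>\<^sup>+X. f X \<partial>Q) * g x \<partial>B)"
    by (simp add: nn_integral_multc fQ)
  also have "\<dots> = (\<integral>\<^sup>+X. f X \<partial>Q) * (\<integral>\<^sup>+x. g x \<partial>B)"
    by (simp add: nn_integral_cmult gm)
  also have "(\<integral>\<^sup>+X. f X \<partial>Q) = (\<integral>\<^sup>+\<omega>. f \<omega> \<partial>bern_seq p)"
    unfolding P by (subst gen[OF fmB]) (simp add: fi B.emeasure_space_1)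
  finally show ?thesis unfolding B_def .
qed

lemma coord_meas: "(\<lambda>\<omega>. \<omega> t) \<in> measurable (bern_seq p) (count_space UNIV)"
proof -
  have a: "(\<lambda>\<omega>. \<omega> t) \<in> measurable (bern_seq p) (measure_pmf (bernoulli_pmf p))"
    unfolding bern_seq_def by (rule measurable_component_singleton) simp
  have b: "sets (measure_pmf (bernoulli_pmf p)) = sets (count_space UNIV)" by simp
  show ?thesis using a measurable_cong_sets[OF refl b] by simp
qed

lemma map_meas: "(\<lambda>\<omega>. map \<omega> [1..<t]) \<in> measurable (bern_seq p) (count_space UNIV)"
proof (induction t)
  case 0
  then show ?case by simp
next
  case (Suc t)
  have ct: "(\<lambda>\<omega>. \<omega> t) \<in> measurable (bern_seq p) (count_space UNIV)"
    by (rule coord_meas)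
  have a: "(\<lambda>\<omega>. (\<lambda>xs \<omega>. xs @ [\<omega> t]) (map \<omega> [1..<t]) \<omega>) \<in> measurable (bern_seq p) (count_space UNIV)"
  proof (rule measurable_compose_countable[OF _ Suc.IH])
    fix xs :: "bool list"
    show "(\<lambda>\<omega>. xs @ [\<omega> t]) \<in> measurable (bern_seq p) (count_space UNIV)"
      using measurable_compose[OF ct measurable_count_space[of "\<lambda>b. xs @ [b]"]] by simp
  qed
  show ?case
  proof (cases "t = 0")
    case True then show ?thesis by simp
  next
    case False
    then have "(\<lambda>\<omega>. map \<omega> [1..<Suc t]) = (\<lambda>\<omega>. map \<omega> [1..<t] @ [\<omega> t])" by auto
    then show ?thesis using a by simp
  qed
qed

theorem proposition1:
  fixes p :: real and \<mu> :: nat and w :: "nat \<Rightarrow> bool list \<Rightarrow> real"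
  assumes "0 < p" and "p < 1" and "1 \<le> \<mu>"
    and "\<And>t xs. w t xs \<ge> 0"
    and "\<And>t \<omega>. \<not> active \<mu> \<omega> t \<Longrightarrow> w t (map \<omega> [1..<t]) = 0"
  shows "(\<integral>\<^sup>+ \<omega>. wsum w \<omega> (M_set \<mu> \<omega>) \<partial>bern_seq p)
       = ennreal (p / (1 - p)) * (\<integral>\<^sup>+ \<omega>. wsum w \<omega> (N_set \<mu> \<omega>) \<partial>bern_seq p)"
proof -
  define W where "W t \<omega> = (if t = 0 then 0 else ennreal (w t (map \<omega> [1..<t])))" for t \<omega>
  define B where "B = measure_pmf (bernoulli_pmf p)"
  have Wm: "W t \<in> borel_measurable (bern_seq p)" for t
  proof -
    have "(\<lambda>\<omega>. (\<lambda>xs. if t = 0 then 0 else ennreal (w t xs)) (map \<omega> [1..<t])) \<in> borel_measurable (bern_seq p)"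
      by (rule measurable_compose[OF map_meas]) simp
    then show ?thesis by (simp add: W_def[abs_def])
  qed
  have Wi: "\<And>\<omega> x. W t (fun_upd \<omega> t x) = W t \<omega>" for t
    unfolding W_def by (auto intro!: arg_cong[where f="\<lambda>xs. ennreal (w t xs)"])
  have eqM: "wsum w \<omega> (M_set \<mu> \<omega>) = (\<Sum>t. W t \<omega> * indicator {True} (\<omega> t))" for \<omega>
    unfolding wsum_def
  proof (rule arg_cong[where f=suminf], rule ext)
    fix t
    show "ennreal (w t (map \<omega> [1..<t])) * indicator (M_set \<mu> \<omega>) t = W t \<omega> * indicator {True} (\<omega> t)"
      using assms(5)[of \<omega> t] by (cases "active \<mu> \<omega> t") (auto simp: W_def M_set_def indicator_def)
  qed
  have eqN: "wsum w \<omega> (N_set \<mu> \<omega>) = (\<Sum>t. W t \<omega> * indicator {False} (\<omega> t))" for \<omega>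
    unfolding wsum_def
  proof (rule arg_cong[where f=suminf], rule ext)
    fix t
    show "ennreal (w t (map \<omega> [1..<t])) * indicator (N_set \<mu> \<omega>) t = W t \<omega> * indicator {False} (\<omega> t)"
      using assms(5)[of \<omega> t] by (cases "active \<mu> \<omega> t") (auto simp: W_def N_set_def indicator_def)
  qed
  have ind: "(\<integral>\<^sup>+\<omega>. W t \<omega> * indicator {b} (\<omega> t) \<partial>bern_seq p)
      = (\<integral>\<^sup>+\<omega>. W t \<omega> \<partial>bern_seq p) * ennreal (pmf (bernoulli_pmf p) b)" for t b
    using assms(1,2) by (subst indep_coord[OF _ _ Wm Wi]) (auto simp: emeasure_pmf_single)
  have mt: "(\<lambda>\<omega>. W t \<omega> * indicator {b} (\<omega> t)) \<in> borel_measurable (bern_seq p)" for t b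
  proof -
    have "(\<lambda>\<omega>. \<omega> t) \<in> measurable (bern_seq p) (count_space UNIV)"
        by (rule coord_meas)
    have "(\<lambda>\<omega>. indicator {b} (\<omega> t) :: ennreal) \<in> borel_measurable (bern_seq p)"
    proof -
      have ic: "(indicator {b} :: bool \<Rightarrow> ennreal) \<in> borel_measurable (count_space UNIV)" by simp
      from measurable_compose[OF _ ic] show ?thesis using coord_meas by blast
    qed
    then show ?thesis using Wm by (intro borel_measurable_times_ennreal) auto
  qed
  define I where "I t = (\<integral>\<^sup>+\<omega>. W t \<omega> \<partial>bern_seq p)" for t
  have L: "(\<integral>\<^sup>+ \<omega>. wsum w \<omega> (M_set \<mu> \<omega>) \<partial>bern_seq p) = (\<Sum>t. I t * ennreal p)"
    unfolding eqM using assms(1,2)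
    by (subst nn_integral_suminf) (auto simp: mt ind I_def)
  have R: "(\<integral>\<^sup>+ \<omega>. wsum w \<omega> (N_set \<mu> \<omega>) \<partial>bern_seq p) = (\<Sum>t. I t * ennreal (1 - p))"
    unfolding eqN using assms(1,2)
    by (subst nn_integral_suminf) (auto simp: mt ind I_def)
  have c: "ennreal (p / (1 - p)) * (I t * ennreal (1 - p)) = I t * ennreal p" for t
  proof -
    have "ennreal (p / (1 - p)) * ennreal (1 - p) = ennreal p"
      using assms(1,2) by (simp add: ennreal_mult[symmetric])
    then show ?thesis by (metis mult.commute mult.left_commute)
  qed
  show ?thesis unfolding L R ennreal_suminf_cmult[symmetric] c ..
qed

end
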